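(* Let $g_c:[0,\infty)\to[0,\infty)$ be a measurable function with $0<K:=\int_0^\infty g_c(u)\,\mathrm{d}u<\infty$, let $\mu_1,\mu_2\in\mathbb{R}$, $\sigma>0$, $0<\rho<1$, $\boldsymbol{\mu}=(\mu_1,\mu_2)^\top$ and $\boldsymbol{\Sigma}=\begin{pmatrix}\sigma^2&\rho\sigma\\ \rho\sigma&1\end{pmatrix}$. Suppose $(Y^*,U^* )^\top$ has PDF $$f(\boldsymbol{y})=\frac{1}{|\boldsymbol{\Sigma}|^{1/2}\,\pi K}\,g_c\big((\boldsymbol{y}-\boldsymbol{\mu})^\top\boldsymbol{\Sigma}^{-1}(\boldsymbol{y}-\boldsymbol{\mu})\big),\qquad \boldsymbol{y}\in\mathbb{R}^2,$$ and $\mathbb{P}(U^*>0)>0$. Then the PDF of $Y^*$ conditional on $U^*>0$ is $$f_{Y^*\mid U^*>0}(y)=\frac{\rho\sqrt{1-\rho^2}}{\sigma}\,\frac{\int_{-\infty}^{z(y)} g_c\Big(\big(\frac{y-\mu_1}{\sigma}\big)^2+w^2\Big)\,\mathrm{d}w}{\int_{-\mu_2}^{\infty}\Big\{\int_{-\infty}^{\infty} g_c\Big(\big(\frac{x}{\rho}\big)^2+\big(\frac{u-x}{\sqrt{1-\rho^2}}\big)^2\Big)\,\mathrm{d}x\Big\}\,\mathrm{d}u},\qquad y\in\mathbb{R},$$ where $z(y)=\frac{\mu_2}{\sqrt{1-\rho^2}}+\frac{\rho}{\sqrt{1-\rho^2}}\,\frac{y-\mu_1}{\sigma}$.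
   Context: The distribution of $(Y^*,U^* )^\top$ is the bivariate symmetric distribution with location $\boldsymbol{\mu}$, scale matrix $\boldsymbol{\Sigma}$ and density generator $g_c$; $|\boldsymbol{\Sigma}|=\sigma^2(1-\rho^2)$. *)

theory Defs
  imports "HOL-Probability.Probability"
begin

text \<open>Quadratic form (y - mu)^T Sigma^{-1} (y - mu) for
  Sigma = [[sigma^2, rho*sigma], [rho*sg, 1]], |Sigma| = sg^2 (1 - rho^2),
  Sigma^{-1} = (1/|Sigma|) [[1, -rho*sg], [-rho*sg, sg^2]], written out.\<close>
definition biv_quad :: "real \<Rightarrow> real \<Rightarrow> real \<Rightarrow> real \<Rightarrow> real \<times> real \<Rightarrow> real" where
  "biv_quad mu1 mu2 sg rho p =
     (let a = fst p - mu1; b = snd p - mu2 in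
       (a^2 - 2 * rho * sg * a * b + sg^2 * b^2) / (sg^2 * (1 - rho^2)))"

definition biv_sym_density ::
  "(real \<Rightarrow> real) \<Rightarrow> real \<Rightarrow> real \<Rightarrow> real \<Rightarrow> real \<Rightarrow> real \<Rightarrow> real \<times> real \<Rightarrow> real" where
  "biv_sym_density g K mu1 mu2 sg rho p =
     g (biv_quad mu1 mu2 sg rho p) / (sqrt (sg^2 * (1 - rho^2)) * pi * K)"

definition zfun :: "real \<Rightarrow> real \<Rightarrow> real \<Rightarrow> real \<Rightarrow> real \<Rightarrow> real" where
  "zfun mu1 mu2 sg rho y =
     mu2 / sqrt (1 - rho^2) + rho / sqrt (1 - rho^2) * ((y - mu1) / sg)"

definition cond_density :: "(real \<Rightarrow> real) \<Rightarrow> real \<Rightarrow> real \<Rightarrow> real \<Rightarrow> real \<Rightarrow> real \<Rightarrow> real" where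
  "cond_density g mu1 mu2 sg rho y =
     rho * sqrt (1 - rho^2) / sg *
     ((LINT w:{..zfun mu1 mu2 sg rho y}|lborel. g (((y - mu1) / sg)^2 + w^2)) /
      (LINT u:{-mu2..}|lborel.
         (LINT x|lborel. g ((x / rho)^2 + ((u - x) / sqrt (1 - rho^2))^2))))"

end

theory Submission imports Defs begin

lemma rho2: assumes "0 < rho" "rho < (1::real)" shows "rho^2 < 1" "0 < 1 - rho^2"
    "(sqrt (1-rho^2))^2 = 1 - rho^2" "0 < sqrt (1-rho^2)"
proof -
  show 1: "rho^2 < 1" using assms by (simp add: power_less_one_iff)
  thus "0 < 1 - rho^2" by simp
  thus "(sqrt (1-rho^2))^2 = 1 - rho^2" "0 < sqrt (1-rho^2)" by auto
qed

lemma Q1: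
  assumes "0 < sg" "0 < rho" "rho < 1"
  shows "biv_quad mu1 mu2 sg rho (mu1 + sg * s, mu2 + rho * s + sqrt (1-rho^2) * w) = s^2 + w^2"
proof -
  note r = rho2[OF assms(2,3)]
  define r where "r = sqrt (1-rho^2)"
  have r2: "1 - rho^2 = r^2" using r r_def by simp
  have "r > 0" using r r_def by simp
  show ?thesis using assms \<open>r>0\<close> unfolding biv_quad_def Let_def r_def[symmetric] r2
    apply (simp add: field_simps power2_eq_square)
    using r2 unfolding power2_eq_square by algebra
qed

lemma Q2:
  assumes "0 < sg" "0 < rho" "rho < 1"
  shows "biv_quad mu1 mu2 sg rho (mu1 + (sg/rho) * x, mu2 + b) = (x/rho)^2 + ((b-x)/sqrt (1-rho^2))^2"
proof -
  note r = rho2[OF assms(2,3)]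
  define r where "r = sqrt (1-rho^2)"
  have r2: "1 - rho^2 = r^2" using r r_def by simp
  have "r > 0" using r r_def by simp
  show ?thesis using assms \<open>r>0\<close> unfolding biv_quad_def Let_def r_def[symmetric] r2
    apply (simp add: field_simps power2_eq_square)
    using r2 unfolding power2_eq_square by algebra
qed

lemma Qnn:
  assumes "0 < sg" "0 < rho" "rho < 1"
  shows "biv_quad mu1 mu2 sg rho p \<ge> 0"
proof -
  obtain y u where p: "p = (y,u)" by force
  define s where "s = (y-mu1)/sg"
  define w where "w = (u - mu2 - rho * s)/sqrt (1-rho^2)"
  have "p = (mu1 + sg * s, mu2 + rho * s + sqrt (1-rho^2) * w)"
    using p assms rho2[OF assms(2,3)] by (simp add: s_def w_def)
  then show ?thesis using Q1[OF assms] by simp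
qed


lemma bsd_meas[measurable]:
  assumes [measurable]: "g \<in> borel_measurable borel"
  shows "biv_sym_density g K mu1 mu2 sg rho \<in> borel_measurable borel"
  unfolding biv_sym_density_def biv_quad_def Let_def by (subst borel_prod[symmetric]) measurable

lemma sqrt_c0: assumes "0 < sg" shows "sqrt (sg^2 * (1 - rho^2)) = sg * sqrt (1 - rho^2)"
  using assms by (simp add: real_sqrt_mult)

lemma stepA:
  assumes g_meas[measurable]: "g \<in> borel_measurable borel"
    and g_nonneg: "\<And>u. u \<ge> 0 \<Longrightarrow> g u \<ge> 0"
    and K_pos: "0 < K" and sigma_pos: "0 < sg" and rho_pos: "0 < rho" and rho_lt1: "rho < 1"
  shows "(\<integral>\<^sup>+u. ennreal (biv_sym_density g K mu1 mu2 sg rho (y,u)) * indicator {0<..} u \<partial>lborel)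
    = ennreal (1/(sg*pi*K)) * (\<integral>\<^sup>+w. ennreal (indicator {..zfun mu1 mu2 sg rho y} w * g (((y-mu1)/sg)^2 + w^2)) \<partial>lborel)"
proof -
  note rr = rho2[OF rho_pos rho_lt1]
  define r where "r = sqrt (1-rho^2)"
  have r0: "r > 0" using rr r_def by simp
  define s where "s = (y-mu1)/sg"
  define t where "t = mu2 + rho * s"
  define z where "z = zfun mu1 mu2 sg rho y"
  have z: "z = t / r" unfolding z_def zfun_def r_def[symmetric] t_def s_def using r0 sigma_pos by (simp add: field_simps)
  have y: "y = mu1 + sg * s" using sigma_pos s_def by simp
  define c0 where "c0 = sg * r * pi * K"
  have c0: "c0 > 0" using sigma_pos r0 K_pos c0_def by simp
  have bsd: "biv_sym_density g K mu1 mu2 sg rho (y, t + r * w) = g (s^2 + w^2) / c0" for w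
    unfolding biv_sym_density_def c0_def sqrt_c0[OF sigma_pos] r_def[symmetric]
    by (subst y, unfold t_def r_def, subst Q1[OF sigma_pos rho_pos rho_lt1]) simp
  have gnn: "g (s^2 + w^2) \<ge> 0" for w by (rule g_nonneg) simp
  have "(\<integral>\<^sup>+u. ennreal (biv_sym_density g K mu1 mu2 sg rho (y,u)) * indicator {0<..} u \<partial>lborel)
     = ennreal r * (\<integral>\<^sup>+w. ennreal (biv_sym_density g K mu1 mu2 sg rho (y, t + r * w)) * indicator {0<..} (t + r * w) \<partial>lborel)"
    using r0 by (subst nn_integral_real_affine[where t=t and c=r]) auto
  also have "(\<integral>\<^sup>+w. ennreal (biv_sym_density g K mu1 mu2 sg rho (y, t + r * w)) * indicator {0<..} (t + r * w) \<partial>lborel)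
     = (\<integral>\<^sup>+w. ennreal (g (s^2 + w^2) / c0) * indicator {0<..} (t + r * w) \<partial>lborel)"
    by (simp add: bsd)
  also have "\<dots> = (\<integral>\<^sup>+w. ennreal (g (s^2 + (0 + -1 * w)^2) / c0) * indicator {0<..} (t + r * (0 + -1 * w)) \<partial>lborel)"
    by (subst nn_integral_real_affine[where t=0 and c="-1"]) auto
  also have "\<dots> = (\<integral>\<^sup>+w. ennreal (g (s^2 + w^2) / c0) * indicator {..z} w \<partial>lborel)"
  proof (rule nn_integral_cong_AE)
    show "AE w in lborel. ennreal (g (s^2 + (0 + -1 * w)^2) / c0) * indicator {0<..} (t + r * (0 + -1 * w))
        = ennreal (g (s^2 + w^2) / c0) * indicator {..z} w"
      using AE_lborel_singleton[of z]
    proof eventually_elim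
      case (elim w)
      have "(0 < t - r * w) = (w < z)" using r0 z by (simp add: field_simps) (metis mult_less_cancel_left_pos)
      then show ?case using elim by (auto simp: indicator_def)
    qed
  qed
  finally have "(\<integral>\<^sup>+u. ennreal (biv_sym_density g K mu1 mu2 sg rho (y,u)) * indicator {0<..} u \<partial>lborel)
      = ennreal r * (\<integral>\<^sup>+w. ennreal (g (s^2 + w^2) / c0) * indicator {..z} w \<partial>lborel)" .
  also have "\<dots> = (\<integral>\<^sup>+w. ennreal r * (ennreal (g (s^2 + w^2) / c0) * indicator {..z} w) \<partial>lborel)"
    by (subst nn_integral_cmult) auto
  also have "\<dots> = (\<integral>\<^sup>+w. ennreal (1/(sg*pi*K)) * ennreal (indicator {..z} w * g (s^2 + w^2)) \<partial>lborel)"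
  proof (rule nn_integral_cong)
    fix w
    have "r * (g (s^2 + w^2) / c0) = 1/(sg*pi*K) * g (s^2 + w^2)" using r0 c0 unfolding c0_def by (simp add: field_simps)
    then show "ennreal r * (ennreal (g (s^2 + w^2) / c0) * indicator {..z} w) = ennreal (1/(sg*pi*K)) * ennreal (indicator {..z} w * g (s^2 + w^2))"
      using r0 c0 gnn[of w] sigma_pos K_pos by (auto simp: indicator_def ennreal_mult[symmetric])
  qed
  also have "\<dots> = ennreal (1/(sg*pi*K)) * (\<integral>\<^sup>+w. ennreal (indicator {..z} w * g (s^2 + w^2)) \<partial>lborel)"
    by (subst nn_integral_cmult) auto
  finally show ?thesis unfolding z_def s_def .
qed


lemma stepC:
  assumes g_meas[measurable]: "g \<in> borel_measurable borel"
    and g_nonneg: "\<And>u. u \<ge> 0 \<Longrightarrow> g u \<ge> 0"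
    and K_pos: "0 < K" and sigma_pos: "0 < sg" and rho_pos: "0 < rho" and rho_lt1: "rho < 1"
  shows "(\<integral>\<^sup>+y. ennreal (biv_sym_density g K mu1 mu2 sg rho (y, mu2 + b)) \<partial>lborel)
    = ennreal (1/(rho * sqrt (1-rho^2)*pi*K)) * (\<integral>\<^sup>+x. ennreal (g ((x / rho)^2 + ((b - x) / sqrt (1 - rho^2))^2)) \<partial>lborel)"
proof -
  note rr = rho2[OF rho_pos rho_lt1]
  define r where "r = sqrt (1-rho^2)"
  have r0: "r > 0" using rr r_def by simp
  define c0 where "c0 = sg * r * pi * K"
  have c0: "c0 > 0" using sigma_pos r0 K_pos c0_def by simp
  define G where "G x = g ((x / rho)^2 + ((b - x) / r)^2)" for x
  have gnn: "G x \<ge> 0" for x unfolding G_def by (rule g_nonneg) simp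
  have bsd: "biv_sym_density g K mu1 mu2 sg rho (mu1 + (sg/rho) * x, mu2 + b) = G x / c0" for x
    unfolding biv_sym_density_def c0_def sqrt_c0[OF sigma_pos] r_def[symmetric] G_def
    by (subst Q2[OF sigma_pos rho_pos rho_lt1]) (simp add: r_def)
  have "(\<integral>\<^sup>+y. ennreal (biv_sym_density g K mu1 mu2 sg rho (y, mu2 + b)) \<partial>lborel)
     = ennreal (sg/rho) * (\<integral>\<^sup>+x. ennreal (biv_sym_density g K mu1 mu2 sg rho (mu1 + (sg/rho) * x, mu2 + b)) \<partial>lborel)"
    using sigma_pos rho_pos by (subst nn_integral_real_affine[where t=mu1 and c="sg/rho"]) auto
  also have "\<dots> = (\<integral>\<^sup>+x. ennreal (sg/rho) * ennreal (G x / c0) \<partial>lborel)"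
    unfolding bsd by (subst nn_integral_cmult) (auto simp: G_def)
  also have "\<dots> = (\<integral>\<^sup>+x. ennreal (1/(rho * r * pi * K)) * ennreal (G x) \<partial>lborel)"
  proof (rule nn_integral_cong)
    fix x
    have "sg/rho * (G x / c0) = 1/(rho * r * pi * K) * G x" using r0 c0 sigma_pos rho_pos unfolding c0_def by (simp add: field_simps)
    then show "ennreal (sg/rho) * ennreal (G x / c0) = ennreal (1/(rho * r * pi * K)) * ennreal (G x)"
      using r0 c0 gnn[of x] sigma_pos K_pos rho_pos by (auto simp: ennreal_mult[symmetric])
  qed
  also have "\<dots> = ennreal (1/(rho * r * pi * K)) * (\<integral>\<^sup>+x. ennreal (G x) \<partial>lborel)"
    by (subst nn_integral_cmult) (auto simp: G_def)
  finally show ?thesis unfolding G_def r_def .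
qed


lemma nn_fin_eq:
  fixes f :: "'a \<Rightarrow> real"
  assumes "f \<in> borel_measurable M" "\<And>x. 0 \<le> f x" "(\<integral>\<^sup>+x. ennreal (f x) \<partial>M) \<noteq> \<infinity>"
  shows "(\<integral>\<^sup>+x. ennreal (f x) \<partial>M) = ennreal (integral\<^sup>L M f)"
  using assms by (intro nn_integral_eq_integral integrableI_nonneg) (auto simp: less_top)

lemma meas_I_joint:
  assumes [measurable]: "g \<in> borel_measurable borel"
  shows "(\<lambda>(y, w). indicator {..zfun mu1 mu2 sg rho y} w * g (((y-mu1)/sg)^2 + w^2) :: real) \<in> borel_measurable (lborel \<Otimes>\<^sub>M lborel)"
  unfolding zfun_def indicator_def atMost_iff mem_Collect_eq by measurable

lemma meas_J_joint:
  assumes [measurable]: "g \<in> borel_measurable borel"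
  shows "(\<lambda>(b, x). g ((x / rho)^2 + ((b - x) / sqrt (1 - rho^2))^2)) \<in> borel_measurable (lborel \<Otimes>\<^sub>M lborel)"
  by measurable

lemma meas_N:
  fixes g :: "real \<Rightarrow> real"
  assumes [measurable]: "g \<in> borel_measurable borel"
  shows "(\<lambda>y. (LINT w:{..zfun mu1 mu2 sg rho y}|lborel. g (((y - mu1) / sg)^2 + w^2))) \<in> borel_measurable lborel"
  unfolding set_lebesgue_integral_def real_scaleR_def
  by (rule lborel.borel_measurable_lebesgue_integral) (rule meas_I_joint[OF assms])

lemma meas_F:
  fixes g :: "real \<Rightarrow> real"
  assumes [measurable]: "g \<in> borel_measurable borel"
  shows "(\<lambda>b. (LINT x|lborel. g ((x / rho)^2 + ((b - x) / sqrt (1 - rho^2))^2))) \<in> borel_measurable lborel"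
  by (rule lborel.borel_measurable_lebesgue_integral) (rule meas_J_joint[OF assms])

lemma meas_I:
  assumes [measurable]: "g \<in> borel_measurable borel"
  shows "(\<lambda>y. \<integral>\<^sup>+w. ennreal (indicator {..zfun mu1 mu2 sg rho y} w * g (((y-mu1)/sg)^2 + w^2)) \<partial>lborel) \<in> borel_measurable lborel"
proof -
  have [measurable]: "(\<lambda>(y, w). indicator {..zfun mu1 mu2 sg rho y} w * g (((y-mu1)/sg)^2 + w^2) :: real) \<in> borel_measurable (lborel \<Otimes>\<^sub>M lborel)"
    by (rule meas_I_joint[OF assms])
  show ?thesis by (rule lborel.borel_measurable_nn_integral) measurable
qed

lemma meas_J:
  assumes [measurable]: "g \<in> borel_measurable borel"
  shows "(\<lambda>b. \<integral>\<^sup>+x. ennreal (g ((x / rho)^2 + ((b - x) / sqrt (1 - rho^2))^2)) \<partial>lborel) \<in> borel_measurable lborel"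
  by (rule lborel.borel_measurable_nn_integral) measurable


theorem corollary3:
  fixes M :: "'a measure" and Y U :: "'a \<Rightarrow> real"
    and g :: "real \<Rightarrow> real" and K mu1 mu2 sg rho :: real
  assumes "prob_space M"
    and g_meas: "g \<in> borel_measurable borel"
    and g_nonneg: "\<And>u. u \<ge> 0 \<Longrightarrow> g u \<ge> 0"
    and g_int: "set_integrable lborel {0..} g"
    and K_def: "K = (LINT u:{0..}|lborel. g u)"
    and K_pos: "0 < K"
    and sigma_pos: "0 < sg"
    and rho_pos: "0 < rho" and rho_lt1: "rho < 1"
    and joint: "distributed M lborel (\<lambda>\<omega>. (Y \<omega>, U \<omega>))
                  (\<lambda>p. ennreal (biv_sym_density g K mu1 mu2 sg rho p))"
    and pos: "measure M {\<omega> \<in> space M. 0 < U \<omega>} > 0"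
  shows "distributed (uniform_measure M {\<omega> \<in> space M. 0 < U \<omega>}) lborel Y
           (\<lambda>y. ennreal (cond_density g mu1 mu2 sg rho y))"
proof -
  interpret P: prob_space M by fact
  note [measurable] = g_meas
  note rr = rho2[OF rho_pos rho_lt1]
  define A where "A = {\<omega> \<in> space M. 0 < U \<omega>}"
  define YU where "YU = (\<lambda>\<omega>. (Y \<omega>, U \<omega>))"
  define h where "h p = ennreal (biv_sym_density g K mu1 mu2 sg rho p)" for p
  define N where "N y = (LINT w:{..zfun mu1 mu2 sg rho y}|lborel. g (((y - mu1) / sg)^2 + w^2))" for y
  define D where "D = (LINT u:{-mu2..}|lborel. (LINT x|lborel. g ((x / rho)^2 + ((u - x) / sqrt (1 - rho^2))^2)))"
  define F where "F b = (LINT x|lborel. g ((x / rho)^2 + ((b - x) / sqrt (1 - rho^2))^2))" for b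
  define I where "I y = (\<integral>\<^sup>+w. ennreal (indicator {..zfun mu1 mu2 sg rho y} w * g (((y-mu1)/sg)^2 + w^2)) \<partial>lborel)" for y
  define J where "J b = (\<integral>\<^sup>+x. ennreal (g ((x / rho)^2 + ((b - x) / sqrt (1 - rho^2))^2)) \<partial>lborel)" for b
  define k1 where "k1 = 1/(sg * pi * K)"
  define k2 where "k2 = 1/(rho * sqrt (1-rho^2) * pi * K)"
  have k1: "k1 > 0" unfolding k1_def using sigma_pos K_pos by simp
  have k2: "k2 > 0" unfolding k2_def using rho_pos rr K_pos by simp
  have h_meas[measurable]: "h \<in> borel_measurable (lborel \<Otimes>\<^sub>M lborel)"
    unfolding h_def lborel_prod by simp
  have jd: "distributed M (lborel \<Otimes>\<^sub>M lborel) YU h"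
    using joint unfolding YU_def h_def by (simp add: lborel_prod)
  have YU_meas[measurable]: "YU \<in> measurable M (lborel \<Otimes>\<^sub>M lborel)" and
    distrYU: "distr M (lborel \<Otimes>\<^sub>M lborel) YU = density (lborel \<Otimes>\<^sub>M lborel) h"
    using jd unfolding distributed_def by auto
  have E: "emeasure M (YU -` S \<inter> space M) = (\<integral>\<^sup>+y. \<integral>\<^sup>+u. h (y,u) * indicator S (y,u) \<partial>lborel \<partial>lborel)"
    if S[measurable]: "S \<in> sets (lborel \<Otimes>\<^sub>M lborel)" for S
  proof -
    have "emeasure M (YU -` S \<inter> space M) = emeasure (distr M (lborel \<Otimes>\<^sub>M lborel) YU) S"
      by (rule emeasure_distr[symmetric, OF YU_meas S])
    also have "\<dots> = (\<integral>\<^sup>+p. h p * indicator S p \<partial>(lborel \<Otimes>\<^sub>M lborel))"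
      unfolding distrYU by (rule emeasure_density[OF h_meas S])
    also have "\<dots> = (\<integral>\<^sup>+y. \<integral>\<^sup>+u. h (y,u) * indicator S (y,u) \<partial>lborel \<partial>lborel)"
      by (rule lborel.nn_integral_fst[symmetric]) auto
    finally show ?thesis .
  qed
  have E2: "emeasure M (YU -` S \<inter> space M) = (\<integral>\<^sup>+u. \<integral>\<^sup>+y. h (y,u) * indicator S (y,u) \<partial>lborel \<partial>lborel)"
    if S[measurable]: "S \<in> sets (lborel \<Otimes>\<^sub>M lborel)" for S
  proof -
    have "emeasure M (YU -` S \<inter> space M) = emeasure (distr M (lborel \<Otimes>\<^sub>M lborel) YU) S"
      by (rule emeasure_distr[symmetric, OF YU_meas S])
    also have "\<dots> = (\<integral>\<^sup>+p. h p * indicator S p \<partial>(lborel \<Otimes>\<^sub>M lborel))"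
      unfolding distrYU by (rule emeasure_density[OF h_meas S])
    also have "\<dots> = (\<integral>\<^sup>+u. \<integral>\<^sup>+y. h (y,u) * indicator S (y,u) \<partial>lborel \<partial>lborel)"
      by (rule lborel_pair.nn_integral_snd[symmetric]) auto
    finally show ?thesis .
  qed
  have A_eq: "A = YU -` (UNIV \<times> {0<..}) \<inter> space M" unfolding A_def YU_def by auto
  have A_meas[measurable]: "A \<in> sets M" unfolding A_eq by measurable
  have stepA': "(\<integral>\<^sup>+u. h (y,u) * indicator {0<..} u \<partial>lborel) = ennreal k1 * I y" for y
    unfolding h_def I_def k1_def by (rule stepA[OF g_meas g_nonneg K_pos sigma_pos rho_pos rho_lt1])
  have stepC': "(\<integral>\<^sup>+y. h (y,u) \<partial>lborel) = ennreal k2 * J (u - mu2)" for u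
    using stepC[OF g_meas g_nonneg K_pos sigma_pos rho_pos rho_lt1, of mu1 mu2 "u - mu2"]
    unfolding h_def J_def k2_def by simp
  have J_meas[measurable]: "J \<in> borel_measurable borel"
    using meas_J[OF g_meas, of rho] unfolding J_def by simp
  have F_meas[measurable]: "F \<in> borel_measurable borel"
    using meas_F[OF g_meas, of rho] unfolding F_def by simp
  have F_nn: "F b \<ge> 0" for b unfolding F_def by (rule integral_nonneg_AE) (auto intro!: g_nonneg)
  have "emeasure M A = (\<integral>\<^sup>+u. indicator {0<..} u * (ennreal k2 * J (u - mu2)) \<partial>lborel)"
    unfolding A_eq
  proof (subst E2, measurable, rule nn_integral_cong)
    fix u
    have "(\<integral>\<^sup>+y. h (y,u) * indicator (UNIV \<times> {0<..}) (y,u) \<partial>lborel) = (\<integral>\<^sup>+y. h (y,u) * indicator {0<..} u \<partial>lborel)"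
      by (auto simp: indicator_def)
    also have "\<dots> = (\<integral>\<^sup>+y. h (y,u) \<partial>lborel) * indicator {0<..} u"
      by (rule nn_integral_multc) measurable
    finally show "(\<integral>\<^sup>+y. h (y,u) * indicator (UNIV \<times> {0<..}) (y,u) \<partial>lborel) = indicator {0<..} u * (ennreal k2 * J (u - mu2))"
      unfolding stepC' by (simp add: mult.commute)
  qed
  also have "\<dots> = (\<integral>\<^sup>+b. indicator {0<..} (mu2 + 1 * b) * (ennreal k2 * J (mu2 + 1 * b - mu2)) \<partial>lborel)"
    by (subst nn_integral_real_affine[where t=mu2 and c=1]) auto
  also have "\<dots> = (\<integral>\<^sup>+b. ennreal k2 * (indicator {-mu2..} b * J b) \<partial>lborel)"
  proof (rule nn_integral_cong_AE)
    show "AE b in lborel. indicator {0<..} (mu2 + 1 * b) * (ennreal k2 * J (mu2 + 1 * b - mu2)) = ennreal k2 * (indicator {-mu2..} b * J b)"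
      using AE_lborel_singleton[of "-mu2"]
      by eventually_elim (auto simp: indicator_def)
  qed
  also have "\<dots> = ennreal k2 * (\<integral>\<^sup>+b. indicator {-mu2..} b * J b \<partial>lborel)"
    by (rule nn_integral_cmult) measurable
  finally have PA0: "emeasure M A = ennreal k2 * (\<integral>\<^sup>+b. indicator {-mu2..} b * J b \<partial>lborel)" .
  have Tfin: "(\<integral>\<^sup>+b. indicator {-mu2..} b * J b \<partial>lborel) \<noteq> \<infinity>"
    using P.emeasure_finite[of A] k2 unfolding PA0 by (auto simp: ennreal_mult_eq_top_iff)
  have "AE b in lborel. indicator {-mu2..} b * J b \<noteq> \<infinity>"
    by (rule nn_integral_PInf_AE[OF _ Tfin]) measurable
  then have "(\<integral>\<^sup>+b. indicator {-mu2..} b * J b \<partial>lborel) = (\<integral>\<^sup>+b. ennreal (indicator {-mu2..} b * F b) \<partial>lborel)"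
  proof (intro nn_integral_cong_AE, eventually_elim)
    case (elim b)
    show ?case
    proof (cases "b \<in> {-mu2..}")
      case True
      then have "J b \<noteq> \<infinity>" using elim by simp
      then have "J b = ennreal (F b)" unfolding J_def F_def
        by (rule nn_fin_eq[rotated 2]) (auto intro!: g_nonneg)
      then show ?thesis using True by simp
    qed simp
  qed
  also have "\<dots> = ennreal (LINT b|lborel. indicator {-mu2..} b * F b)"
    using Tfin unfolding calculation by (intro nn_fin_eq) (auto simp: F_nn)
  also have "(LINT b|lborel. indicator {-mu2..} b * F b) = D"
    unfolding D_def F_def set_lebesgue_integral_def by simp
  finally have PA: "emeasure M A = ennreal (k2 * D)"
    unfolding PA0 using k2 by (simp add: ennreal_mult')
  have Dpos: "D > 0"
  proof -
    have "0 < ennreal (measure M A)" using pos unfolding A_def by simp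
    then have "0 < ennreal (k2 * D)" using PA P.emeasure_eq_measure[of A] by metis
    then have "0 < k2 * D" by simp
    then show ?thesis using k2 by (simp add: zero_less_mult_iff)
  qed
  have I_meas[measurable]: "I \<in> borel_measurable borel"
    using meas_I[OF g_meas, of mu1 mu2 sg rho] unfolding I_def by simp
  have N_meas[measurable]: "N \<in> borel_measurable borel"
    using meas_N[OF g_meas, of mu1 mu2 sg rho] unfolding N_def by simp
  have N_nn: "N y \<ge> 0" for y unfolding N_def set_lebesgue_integral_def
    by (rule integral_nonneg_AE) (auto intro!: g_nonneg simp: indicator_def)
  have "emeasure M A = (\<integral>\<^sup>+y. ennreal k1 * I y \<partial>lborel)"
    unfolding A_eq
  proof (subst E, measurable, rule nn_integral_cong)
    fix y
    have "(\<integral>\<^sup>+u. h (y,u) * indicator (UNIV \<times> {0<..}) (y,u) \<partial>lborel) = (\<integral>\<^sup>+u. h (y,u) * indicator {0<..} u \<partial>lborel)"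
      by (auto simp: indicator_def)
    then show "(\<integral>\<^sup>+u. h (y,u) * indicator (UNIV \<times> {0<..}) (y,u) \<partial>lborel) = ennreal k1 * I y"
      unfolding stepA' .
  qed
  also have "\<dots> = ennreal k1 * (\<integral>\<^sup>+y. I y \<partial>lborel)"
    by (rule nn_integral_cmult) measurable
  finally have PAy: "emeasure M A = ennreal k1 * (\<integral>\<^sup>+y. I y \<partial>lborel)" .
  have Ifin: "(\<integral>\<^sup>+y. I y \<partial>lborel) \<noteq> \<infinity>"
    using P.emeasure_finite[of A] k1 unfolding PAy by (auto simp: ennreal_mult_eq_top_iff)
  have "AE y in lborel. I y \<noteq> \<infinity>"
    by (rule nn_integral_PInf_AE[OF _ Ifin]) measurable
  then have AE_I: "AE y in lborel. I y = ennreal (N y)"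
  proof eventually_elim
    case (elim y)
    have "I y = ennreal (LINT w|lborel. indicator {..zfun mu1 mu2 sg rho y} w * g (((y-mu1)/sg)^2 + w^2))"
      using elim unfolding I_def
      by (rule nn_fin_eq[rotated 2]) (auto intro!: g_nonneg simp: zfun_def indicator_def)
    then show ?case unfolding N_def set_lebesgue_integral_def by simp
  qed
  have Y_meas[measurable]: "Y \<in> measurable M lborel"
  proof -
    have "(\<lambda>\<omega>. fst (YU \<omega>)) \<in> measurable M lborel" by measurable
    then show ?thesis unfolding YU_def by simp
  qed
  have cd: "cond_density g mu1 mu2 sg rho y = rho * sqrt (1-rho^2) / sg * (N y / D)" for y
    by (simp add: cond_density_def N_def D_def)
  have cd_meas: "(\<lambda>y. ennreal (cond_density g mu1 mu2 sg rho y)) \<in> borel_measurable lborel"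
    unfolding cd by measurable
  show ?thesis unfolding distributed_def A_def[symmetric]
  proof (intro conjI)
    show "Y \<in> measurable (uniform_measure M A) lborel"
      using Y_meas by (simp add: measurable_cong_sets[OF sets_uniform_measure refl])
    show "(\<lambda>y. ennreal (cond_density g mu1 mu2 sg rho y)) \<in> borel_measurable lborel" by (rule cd_meas)
    show "distr (uniform_measure M A) lborel Y = density lborel (\<lambda>y. ennreal (cond_density g mu1 mu2 sg rho y))"
    proof (rule measure_eqI)
      show "sets (distr (uniform_measure M A) lborel Y) = sets (density lborel (\<lambda>y. ennreal (cond_density g mu1 mu2 sg rho y)))"
        by simp
      fix B assume "B \<in> sets (distr (uniform_measure M A) lborel Y)"
      then have B[measurable]: "B \<in> sets lborel" by simp
      have Yb: "Y \<in> borel_measurable M" using Y_meas by simp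
      have Bb: "B \<in> sets borel" using B by simp
      have "emeasure (distr (uniform_measure M A) lborel Y) B = emeasure (uniform_measure M A) (Y -` B \<inter> space (uniform_measure M A))"
        using Yb Bb by (intro emeasure_distr) (auto simp: measurable_cong_sets[OF sets_uniform_measure refl])
      also have "\<dots> = emeasure M (A \<inter> (Y -` B \<inter> space M)) / emeasure M A"
      proof -
        have "Y \<in> borel_measurable M" using Y_meas by simp
        moreover have "B \<in> sets borel" using B by simp
        ultimately show ?thesis by (subst emeasure_uniform_measure) auto
      qed
      also have "A \<inter> (Y -` B \<inter> space M) = YU -` (B \<times> {0<..}) \<inter> space M"
        unfolding A_def YU_def by auto
      also have "emeasure M (YU -` (B \<times> {0<..}) \<inter> space M) = (\<integral>\<^sup>+y. indicator B y * (ennreal k1 * I y) \<partial>lborel)"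
      proof (subst E, measurable, rule nn_integral_cong)
        fix y
        have "(\<integral>\<^sup>+u. h (y,u) * indicator (B \<times> {0<..}) (y,u) \<partial>lborel) = (\<integral>\<^sup>+u. indicator B y * (h (y,u) * indicator {0<..} u) \<partial>lborel)"
          by (auto simp: indicator_def intro!: nn_integral_cong)
        also have "\<dots> = indicator B y * (\<integral>\<^sup>+u. h (y,u) * indicator {0<..} u \<partial>lborel)"
          by (rule nn_integral_cmult) measurable
        finally show "(\<integral>\<^sup>+u. h (y,u) * indicator (B \<times> {0<..}) (y,u) \<partial>lborel) = indicator B y * (ennreal k1 * I y)"
          unfolding stepA' .
      qed
      also have "(\<integral>\<^sup>+y. indicator B y * (ennreal k1 * I y) \<partial>lborel) / emeasure M A
          = (\<integral>\<^sup>+y. indicator B y * (ennreal k1 * I y) / ennreal (k2 * D) \<partial>lborel)"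
        unfolding PA by (rule nn_integral_divide[symmetric]) measurable
      also have "\<dots> = (\<integral>\<^sup>+y. ennreal (cond_density g mu1 mu2 sg rho y) * indicator B y \<partial>lborel)"
      proof (rule nn_integral_cong_AE)
        show "AE y in lborel. indicator B y * (ennreal k1 * I y) / ennreal (k2 * D) = ennreal (cond_density g mu1 mu2 sg rho y) * indicator B y"
          using AE_I
        proof eventually_elim
          case (elim y)
          have "ennreal k1 * I y / ennreal (k2 * D) = ennreal (k1 * N y / (k2 * D))"
            unfolding elim using k1 k2 Dpos N_nn[of y]
            by (simp add: ennreal_mult'[symmetric] divide_ennreal)
          also have "k1 * N y / (k2 * D) = cond_density g mu1 mu2 sg rho y"
            unfolding cd k1_def k2_def using sigma_pos rho_pos rr K_pos Dpos by (simp add: field_simps)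
          finally show ?case by (auto simp: indicator_def)
        qed
      qed
      also have "\<dots> = emeasure (density lborel (\<lambda>y. ennreal (cond_density g mu1 mu2 sg rho y))) B"
        by (rule emeasure_density[symmetric, OF cd_meas B])
      finally show "emeasure (distr (uniform_measure M A) lborel Y) B = emeasure (density lborel (\<lambda>y. ennreal (cond_density g mu1 mu2 sg rho y))) B" .
    qed
  qed
qed
end
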